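(* Let $d$ be an integer with $1\le d\le q$. Then $$e_1(d,m)>e_2(d,m)>\dots>e_{\binom{m+d}{d}}(d,m)=0.$$
   Context: $q$ is a prime power, $\mathbb{F}_q$ the finite field with $q$ elements, $m$ a positive integer. $e_r(d,m)$ is the maximum, over all families of $r$ linearly independent homogeneous polynomials of degree $d$ in $\mathbb{F}_q[x_0,\dots,x_m]$, of the number of points of $\mathbb{P}^m(\mathbb{F}_q)$ at which all of them vanish. *)

theory Defs
  imports Complex_Main "HOL-Library.Function_Algebras"
begin

definition monoms :: "nat \<Rightarrow> nat \<Rightarrow> (nat \<Rightarrow> nat) set" where
  "monoms d m = {\<alpha>. (\<forall>i>m. \<alpha> i = 0) \<and> (\<Sum>i\<le>m. \<alpha> i) = d}"

text \<open>A homogeneous polynomial of degree d in F[x_0,...,x_m] is represented by its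
  coefficient function on monomials, supported on monomials of total degree d.
  (The zero polynomial is included; it is never in a linearly independent family.)\<close>
definition hom_polys :: "nat \<Rightarrow> nat \<Rightarrow> ((nat \<Rightarrow> nat) \<Rightarrow> 'a::field) set" where
  "hom_polys d m = {f. \<forall>\<alpha>. \<alpha> \<notin> monoms d m \<longrightarrow> f \<alpha> = 0}"

definition heval :: "nat \<Rightarrow> nat \<Rightarrow> ((nat \<Rightarrow> nat) \<Rightarrow> 'a::field) \<Rightarrow> (nat \<Rightarrow> 'a) \<Rightarrow> 'a" where
  "heval d m f x = (\<Sum>\<alpha>\<in>monoms d m. f \<alpha> * (\<Prod>i\<le>m. x i ^ \<alpha> i))"

text \<open>Points of P^m(F): classes of nonzero vectors (x_0,...,x_m) modulo nonzero scalars.\<close>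
definition proj_points :: "nat \<Rightarrow> (nat \<Rightarrow> 'a::field) set set" where
  "proj_points m = {{(\<lambda>i. c * x i) | c. c \<noteq> 0} | x.
      (\<forall>i>m. x i = 0) \<and> (\<exists>i\<le>m. x i \<noteq> 0)}"

definition num_zeros :: "nat \<Rightarrow> nat \<Rightarrow> ((nat \<Rightarrow> nat) \<Rightarrow> 'a::field) set \<Rightarrow> nat" where
  "num_zeros d m F = card {P \<in> proj_points m. \<forall>f\<in>F. \<forall>x\<in>P. heval d m f x = 0}"

definition e_r :: "'a::{finite,field} itself \<Rightarrow> nat \<Rightarrow> nat \<Rightarrow> nat \<Rightarrow> nat" where
  "e_r _ r d m = Max {num_zeros d m (F :: ((nat \<Rightarrow> nat) \<Rightarrow> 'a) set) | F.
      F \<subseteq> hom_polys d m \<and> card F = r \<and>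
      module.independent (\<lambda>c f. (\<lambda>\<alpha>. c * f \<alpha>)) F}"

end

theory Submission
  imports Defs "HOL-Computational_Algebra.Polynomial"
begin

interpretation FV: vector_space "\<lambda>(c::'a::field) (f::(nat\<Rightarrow>nat)\<Rightarrow>'a) \<alpha>. c * f \<alpha>"
  by unfold_locales (auto simp: fun_eq_iff algebra_simps)

lemma sum_fun_apply: "(\<Sum>x\<in>A. g x) (a::'b) = (\<Sum>x\<in>A. g x a)"
  by (induction A rule: infinite_finite_induct) auto

section \<open>Monomials\<close>

lemma monoms_bij:
  "bij_betw (\<lambda>\<alpha>. map \<alpha> [0..<Suc m]) (monoms d m) {l. length l = Suc m \<and> sum_list l = d}"
proof (rule bij_betwI')
  fix \<alpha> \<beta> assume a: "\<alpha> \<in> monoms d m" and b: "\<beta> \<in> monoms d m"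
  show "(map \<alpha> [0..<Suc m] = map \<beta> [0..<Suc m]) = (\<alpha> = \<beta>)"
  proof
    assume h: "map \<alpha> [0..<Suc m] = map \<beta> [0..<Suc m]"
    show "\<alpha> = \<beta>"
    proof
      fix i show "\<alpha> i = \<beta> i"
      proof (cases "i \<le> m")
        case True
        have e: "map \<gamma> [0..<Suc m] ! i = \<gamma> i" for \<gamma> :: "nat \<Rightarrow> nat"
          using True by (subst nth_map) (simp_all del: upt_Suc)
        show ?thesis using h e[of \<alpha>] e[of \<beta>] by metis
      next
        case False then show ?thesis using a b by (auto simp: monoms_def)
      qed
    qed
  qed simp
next
  fix \<alpha> assume a: "\<alpha> \<in> monoms d m"
  have "sum_list (map \<alpha> [0..<Suc m]) = (\<Sum>i\<in>{0..<Suc m}. \<alpha> i)"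
    by (simp only: sum_set_upt_conv_sum_list_nat[symmetric] set_upt)
  also have "{0..<Suc m} = {..m}" by auto
  finally show "map \<alpha> [0..<Suc m] \<in> {l. length l = Suc m \<and> sum_list l = d}"
    using a by (simp add: monoms_def)
next
  fix l :: "nat list" assume l: "l \<in> {l. length l = Suc m \<and> sum_list l = d}"
  define \<alpha> where "\<alpha> = (\<lambda>i. if i \<le> m then l ! i else 0)"
  have e: "map \<alpha> [0..<Suc m] = l"
    using l by (intro nth_equalityI) (auto simp: \<alpha>_def simp del: upt_Suc)
  have "sum_list (map \<alpha> [0..<Suc m]) = (\<Sum>i\<in>{0..<Suc m}. \<alpha> i)"
    by (simp only: sum_set_upt_conv_sum_list_nat[symmetric] set_upt)
  also have "{0..<Suc m} = {..m}" by auto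
  finally have "(\<Sum>i\<le>m. \<alpha> i) = d" using e l by (simp del: upt_Suc)
  then have "\<alpha> \<in> monoms d m" by (auto simp: monoms_def \<alpha>_def)
  with e show "\<exists>\<alpha>\<in>monoms d m. l = map \<alpha> [0..<Suc m]" by auto
qed

lemma finite_monoms: "finite (monoms d m)"
proof -
  have "{l. length l = Suc m \<and> sum_list l = d} \<subseteq> {l. set l \<subseteq> {..d} \<and> length l = Suc m}"
    by (auto simp: member_le_sum_list)
  then have "finite {l. length l = Suc m \<and> sum_list l = d}"
    by (rule finite_subset) (intro finite_lists_length_eq, simp)
  then show ?thesis using monoms_bij bij_betw_finite by blast
qed

lemma card_monoms: "card (monoms d m) = (m + d) choose d"
proof -
  have "card (monoms d m) = card {l. length l = Suc m \<and> sum_list l = d}"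
    using monoms_bij bij_betw_same_card by blast
  also have "\<dots> = (d + Suc m - 1) choose d" by (rule card_length_sum_list)
  finally show ?thesis by (simp add: add.commute)
qed

lemma heval_lin: "heval d m (\<lambda>\<alpha>. f \<alpha> - c * g \<alpha>) x = heval d m f x - c * heval d m g x"
  by (simp add: heval_def algebra_simps sum_subtractf sum_distrib_left)

lemma heval_add: "heval d m (f + g) x = heval d m f x + heval d m g x"
  by (simp add: heval_def algebra_simps sum.distrib)

lemma heval_scale: "heval d m (\<lambda>\<alpha>. c * f \<alpha>) x = c * heval d m f x"
  by (simp add: heval_def algebra_simps sum_distrib_left)

lemma heval_zero: "heval d m 0 x = 0"
  by (simp add: heval_def)

lemma heval_span:
  assumes "g \<in> FV.span S" "\<forall>f\<in>S. heval d m f x = 0"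
  shows "heval d m g x = 0"
proof -
  have "FV.span S \<subseteq> {g. heval d m g x = 0}"
    using assms(2)
    by (intro FV.span_minimal) (auto simp: FV.subspace_def heval_add heval_zero heval_scale)
  then show ?thesis using assms(1) by auto
qed

lemma heval_homog:
  assumes "\<forall>\<alpha>. \<alpha> \<notin> monoms d m \<longrightarrow> f \<alpha> = 0"
  shows "heval d m f (\<lambda>i. c * x i) = c ^ d * heval d m f x"
proof -
  have "(\<Prod>i\<le>m. (c * x i) ^ \<alpha> i) = c ^ d * (\<Prod>i\<le>m. x i ^ \<alpha> i)" if "\<alpha> \<in> monoms d m" for \<alpha>
  proof -
    have "(\<Prod>i\<le>m. (c * x i) ^ \<alpha> i) = (\<Prod>i\<le>m. c ^ \<alpha> i) * (\<Prod>i\<le>m. x i ^ \<alpha> i)"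
      by (simp add: power_mult_distrib prod.distrib)
    also have "(\<Prod>i\<le>m. c ^ \<alpha> i) = c ^ d" using that by (simp add: power_sum[symmetric] monoms_def)
    finally show ?thesis .
  qed
  then show ?thesis by (simp add: heval_def sum_distrib_left algebra_simps)
qed

lemma heval_local: "heval d m f x = heval d m f (\<lambda>i. if i \<le> m then x i else 0)"
  unfolding heval_def by (intro sum.cong refl prod.cong) auto

lemma heval_at_zero:
  assumes "1 \<le> d" shows "heval d m f (\<lambda>_. 0) = 0"
  unfolding heval_def
proof (intro sum.neutral ballI)
  fix \<alpha> assume a: "\<alpha> \<in> monoms d m"
  have "\<exists>i\<le>m. \<alpha> i \<noteq> 0"
  proof (rule ccontr)
    assume "\<not> ?thesis"
    then have "(\<Sum>i\<le>m. \<alpha> i) = 0" by auto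
    with a assms show False by (simp add: monoms_def)
  qed
  then show "f \<alpha> * (\<Prod>i\<le>m. (0::'a) ^ \<alpha> i) = 0" by auto
qed

section \<open>Nonvanishing\<close>

lemma card_field_ge2: "2 \<le> card (UNIV::'a::{finite,field} set)"
proof -
  have "card {0::'a, 1} \<le> card (UNIV::'a set)" by (rule card_mono) auto
  then show ?thesis by simp
qed

lemma fin_pow_card: "(x::'a::{finite,field}) ^ card (UNIV::'a set) = x"
proof (cases "x = 0")
  case True then show ?thesis using card_field_ge2[where 'a='a] by simp
next
  case False
  let ?U = "UNIV - {0::'a}"
  have "(\<Prod>y\<in>?U. x * y) = (\<Prod>y\<in>?U. y)"
    by (rule prod.reindex_bij_witness[where i="\<lambda>y. y / x" and j="\<lambda>y. x * y"]) (use False in auto)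
  moreover have "(\<Prod>y\<in>?U. x * y) = x ^ card ?U * (\<Prod>y\<in>?U. y)"
    by (simp add: prod.distrib)
  moreover have "(\<Prod>y\<in>?U. y) \<noteq> 0" by simp
  ultimately have "x ^ card ?U = 1" by simp
  moreover have "card ?U = card (UNIV::'a set) - 1" by (simp add: card_Diff_singleton)
  moreover have "card (UNIV::'a set) = Suc (card (UNIV::'a set) - 1)" using card_field_ge2[where 'a='a] by simp
  ultimately show ?thesis by (metis mult.right_neutral power_Suc)
qed

lemma univ_vanish:
  fixes a :: "nat \<Rightarrow> 'a::{finite,field}"
  assumes "n \<le> card (UNIV::'a set)" "\<forall>t. (\<Sum>k<n. a k * t ^ k) = 0" "k < n"
  shows "a k = 0"
proof -
  define p where "p = (\<Sum>k<n. monom (a k) k)"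
  have pe: "poly p t = (\<Sum>k<n. a k * t ^ k)" for t by (simp add: p_def poly_sum poly_monom)
  have pc: "coeff p j = (if j < n then a j else 0)" for j
    by (simp add: p_def coeff_sum coeff_monom)
  have "p = 0"
  proof (rule ccontr)
    assume p0: "p \<noteq> 0"
    have "degree p < n"
    proof -
      have "n > 0" using assms(3) by simp
      moreover have "degree p \<le> n - 1"
        by (rule degree_le) (auto simp: pc)
      ultimately show ?thesis by simp
    qed
    moreover have "card {x. poly p x = 0} \<le> degree p" by (rule card_poly_roots_bound[OF p0])
    moreover have "{x. poly p x = 0} = UNIV" using assms(2) pe by auto
    ultimately show False using assms(1) by simp
  qed
  then show ?thesis using pc[of k] assms(3) by simp
qed

lemma multi_vanish:
  fixes c :: "(nat \<Rightarrow> nat) \<Rightarrow> 'a::{finite,field}"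
  assumes "finite S" "\<forall>\<alpha>\<in>S. \<forall>i. \<alpha> i < card (UNIV::'a set)" "\<forall>\<alpha>\<in>S. \<forall>i\<ge>n. \<alpha> i = 0"
    "\<forall>x. (\<Sum>\<alpha>\<in>S. c \<alpha> * (\<Prod>i<n. x i ^ \<alpha> i)) = 0" "\<alpha> \<in> S"
  shows "c \<alpha> = 0"
  using assms
proof (induction n arbitrary: S c \<alpha>)
  case 0
  then have "S = {\<lambda>_. 0}" by auto
  then show ?case using "0.prems"(4,5) by auto
next
  case (Suc n)
  let ?q = "card (UNIV::'a set)"
  define A where "A k x = (\<Sum>\<beta>\<in>{\<beta>\<in>S. \<beta> n = k}. c \<beta> * (\<Prod>i<n. x i ^ \<beta> i))" for k x
  have split: "(\<Sum>\<alpha>\<in>S. c \<alpha> * (\<Prod>i<Suc n. x i ^ \<alpha> i)) = (\<Sum>k<?q. A k x * x n ^ k)" for x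
  proof -
    have "(\<Sum>\<alpha>\<in>S. c \<alpha> * (\<Prod>i<Suc n. x i ^ \<alpha> i))
        = (\<Sum>k<?q. \<Sum>\<alpha>\<in>{\<beta>\<in>S. \<beta> n = k}. c \<alpha> * (\<Prod>i<Suc n. x i ^ \<alpha> i))"
      by (rule sum.group[symmetric]) (use Suc.prems in auto)
    also have "\<dots> = (\<Sum>k<?q. A k x * x n ^ k)"
      unfolding A_def sum_distrib_right
      by (intro sum.cong refl) (auto simp: mult.assoc)
    finally show ?thesis .
  qed
  have Aloc: "A k (x(n := t)) = A k x" for k x t
    unfolding A_def by (intro sum.cong refl arg_cong2[where f="(*)"] prod.cong) auto
  have A0: "A k x = 0" if "k < ?q" for k x
  proof -
    have "\<forall>t. (\<Sum>k<?q. A k x * t ^ k) = 0"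
    proof
      fix t
      have "(\<Sum>k<?q. A k x * t ^ k) = (\<Sum>k<?q. A k (x(n:=t)) * (x(n:=t)) n ^ k)"
        by (simp add: Aloc)
      also have "\<dots> = 0" by (metis split Suc.prems(4))
      finally show "(\<Sum>k<?q. A k x * t ^ k) = 0" .
    qed
    then show ?thesis using univ_vanish[of ?q "\<lambda>k. A k x" k] that by simp
  qed
  define k where "k = \<alpha> n"
  have kq: "k < ?q" using Suc.prems(2,5) k_def by auto
  define S' where "S' = (\<lambda>\<beta>. \<beta>(n:=0)) ` {\<beta>\<in>S. \<beta> n = k}"
  define c' where "c' \<gamma> = c (\<gamma>(n:=k))" for \<gamma>
  have inj: "inj_on (\<lambda>\<beta>. \<beta>(n:=0)) {\<beta>\<in>S. \<beta> n = k}"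
  proof (rule inj_onI)
    fix \<beta> \<beta>' assume "\<beta> \<in> {\<beta>\<in>S. \<beta> n = k}" "\<beta>' \<in> {\<beta>\<in>S. \<beta> n = k}" "\<beta>(n:=0) = \<beta>'(n:=0)"
    then show "\<beta> = \<beta>'" by (metis (mono_tags, lifting) fun_upd_triv fun_upd_upd mem_Collect_eq)
  qed
  have "c' (\<alpha>(n:=0)) = 0"
  proof (rule Suc.IH[of S' c' "\<alpha>(n:=0)"])
    show "finite S'" using Suc.prems(1) by (simp add: S'_def)
    show "\<forall>\<alpha>\<in>S'. \<forall>i. \<alpha> i < ?q" using Suc.prems(2) card_field_ge2[where 'a='a] by (auto simp: S'_def)
    show "\<forall>\<alpha>\<in>S'. \<forall>i\<ge>n. \<alpha> i = 0" using Suc.prems(3) by (auto simp: S'_def)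
    show "\<alpha>(n:=0) \<in> S'" using Suc.prems(5) k_def by (auto simp: S'_def)
    show "\<forall>x. (\<Sum>\<alpha>\<in>S'. c' \<alpha> * (\<Prod>i<n. x i ^ \<alpha> i)) = 0"
    proof
      fix x
      have "(\<Sum>\<alpha>\<in>S'. c' \<alpha> * (\<Prod>i<n. x i ^ \<alpha> i))
          = (\<Sum>\<beta>\<in>{\<beta>\<in>S. \<beta> n = k}. c' (\<beta>(n:=0)) * (\<Prod>i<n. x i ^ (\<beta>(n:=0)) i))"
        unfolding S'_def by (rule sum.reindex[OF inj, unfolded comp_def])
      also have "\<dots> = A k x"
        unfolding A_def c'_def
        by (intro sum.cong refl arg_cong2[where f="(*)"] prod.cong) auto
      also have "\<dots> = 0" using A0 kq by simp
      finally show "(\<Sum>\<alpha>\<in>S'. c' \<alpha> * (\<Prod>i<n. x i ^ \<alpha> i)) = 0" .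
    qed
  qed
  then show ?case by (simp add: c'_def k_def)
qed

lemma monoms_le: "\<alpha> \<in> monoms d m \<Longrightarrow> \<alpha> i \<le> d"
  by (cases "i \<le> m") (auto simp: monoms_def intro!: member_le_sum[of i "{..m}", simplified])

lemma monoms_full:
  assumes "\<alpha> \<in> monoms d m" "\<alpha> j = d" "d \<ge> 1"
  shows "\<alpha> = (\<lambda>i. if i = j then d else 0)" and "j \<le> m"
proof -
  show jm: "j \<le> m" by (rule ccontr) (use assms in \<open>auto simp: monoms_def\<close>)
  have "\<alpha> i = 0" if "i \<noteq> j" for i
  proof (cases "i \<le> m")
    case True
    have "(\<Sum>k\<in>{i,j}. \<alpha> k) \<le> (\<Sum>k\<le>m. \<alpha> k)"
      by (rule sum_mono2) (use True jm in auto)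
    then show ?thesis using assms that by (auto simp: monoms_def)
  next
    case False then show ?thesis using assms by (auto simp: monoms_def)
  qed
  then show "\<alpha> = (\<lambda>i. if i = j then d else 0)" using assms by auto
qed

lemma hom_nonvanish:
  fixes f :: "(nat \<Rightarrow> nat) \<Rightarrow> 'a::{finite,field}"
  assumes f: "f \<in> hom_polys d m" "f \<noteq> 0" and d: "1 \<le> d" "d \<le> card (UNIV::'a set)"
  shows "\<exists>x. heval d m f x \<noteq> 0"
proof (rule ccontr)
  assume "\<not> ?thesis"
  then have van: "\<forall>x. heval d m f x = 0" by auto
  let ?q = "card (UNIV::'a set)"
  let ?M = "monoms d m"
  have q2: "2 \<le> ?q" by (rule card_field_ge2)
  define \<rho> where "\<rho> \<alpha> = (\<lambda>j. if \<alpha> j = ?q then 1 else \<alpha> j)" for \<alpha> :: "nat \<Rightarrow> nat"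
  have pw: "(\<Prod>i\<le>m. x i ^ \<alpha> i) = (\<Prod>i<Suc m. x i ^ \<rho> \<alpha> i)" for x :: "nat \<Rightarrow> 'a" and \<alpha>
  proof -
    have "{..m} = {..<Suc m}" by auto
    then show ?thesis unfolding \<rho>_def by (intro prod.cong) (auto simp: fin_pow_card)
  qed
  have full: "\<rho> \<alpha> = (\<lambda>i. if i = j then 1 else 0)" "d = ?q" "j \<le> m"
    if "\<alpha> \<in> ?M" "\<alpha> j = ?q" for \<alpha> j
  proof -
    have "?q \<le> d" using monoms_le[OF that(1), of j] that by simp
    then show dq: "d = ?q" using d by simp
    show "j \<le> m" using monoms_full[of \<alpha> d m j] that dq d by simp
    have "\<alpha> = (\<lambda>i. if i = j then d else 0)" using monoms_full[of \<alpha> d m j] that dq d by simp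
    then show "\<rho> \<alpha> = (\<lambda>i. if i = j then 1 else 0)" using q2 dq unfolding \<rho>_def by auto
  qed
  have nofull: "\<rho> \<alpha> = \<alpha>" if "\<forall>j. \<alpha> j \<noteq> ?q" for \<alpha>
    using that by (auto simp: \<rho>_def)
  have ind_sum: "(\<Sum>i\<le>m. (if i = j then 1 else 0::nat)) = 1" if "j \<le> m" for j
    using that by simp
  have inj: "inj_on \<rho> ?M"
  proof (rule inj_onI)
    fix \<alpha> \<beta> assume a: "\<alpha> \<in> ?M" and b: "\<beta> \<in> ?M" and e: "\<rho> \<alpha> = \<rho> \<beta>"
    show "\<alpha> = \<beta>"
    proof (cases "\<exists>j. \<alpha> j = ?q")
      case True
      then obtain j where j: "\<alpha> j = ?q" by auto
      show ?thesis
      proof (cases "\<exists>j. \<beta> j = ?q")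
        case True
        then obtain j' where j': "\<beta> j' = ?q" by auto
        have "(\<lambda>i. if i = j then 1 else 0::nat) = (\<lambda>i. if i = j' then 1 else 0)"
          using full[OF a j] full[OF b j'] e by simp
        then have "j = j'" by (metis zero_neq_one)
        then show ?thesis using monoms_full[of \<alpha> d m j] monoms_full[of \<beta> d m j'] full[OF a j] j j' a b d
          by simp
      next
        case False
        then have "\<beta> = (\<lambda>i. if i = j then 1 else 0)" using full[OF a j] nofull[of \<beta>] e by simp
        then have "d = 1" using b ind_sum[OF full(3)[OF a j]] by (simp add: monoms_def)
        then show ?thesis using full(2)[OF a j] q2 by simp
      qed
    next
      case False
      show ?thesis
      proof (cases "\<exists>j. \<beta> j = ?q")
        case True
        then obtain j where j: "\<beta> j = ?q" by auto
        then have "\<alpha> = (\<lambda>i. if i = j then 1 else 0)" using full[OF b j] nofull[of \<alpha>] e False by simp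
        then have "d = 1" using a ind_sum[OF full(3)[OF b j]] by (simp add: monoms_def)
        then show ?thesis using full(2)[OF b j] q2 by simp
      next
        case False2: False
        then show ?thesis using nofull[of \<alpha>] nofull[of \<beta>] e False by auto
      qed
    qed
  qed
  define c where "c \<beta> = f (inv_into ?M \<rho> \<beta>)" for \<beta>
  have zero: "c \<beta> = 0" if "\<beta> \<in> \<rho> ` ?M" for \<beta>
  proof (rule multi_vanish[where S="\<rho> ` ?M" and n="Suc m" and c=c and \<alpha>=\<beta>])
    show "finite (\<rho> ` ?M)" using finite_monoms by simp
    show "\<beta> \<in> \<rho> ` ?M" by fact
    show "\<forall>\<alpha>\<in>\<rho> ` ?M. \<forall>i. \<alpha> i < ?q"
    proof (intro ballI allI)
      fix \<gamma> i assume "\<gamma> \<in> \<rho> ` ?M"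
      then obtain \<alpha> where a: "\<alpha> \<in> ?M" "\<gamma> = \<rho> \<alpha>" by auto
      show "\<gamma> i < ?q" using monoms_le[OF a(1), of i] d q2 a(2) unfolding \<rho>_def by auto
    qed
    show "\<forall>\<alpha>\<in>\<rho> ` ?M. \<forall>i\<ge>Suc m. \<alpha> i = 0"
      using q2 by (auto simp: \<rho>_def monoms_def)
    show "\<forall>x. (\<Sum>\<alpha>\<in>\<rho> ` ?M. c \<alpha> * (\<Prod>i<Suc m. x i ^ \<alpha> i)) = 0"
    proof
      fix x :: "nat \<Rightarrow> 'a"
      have "(\<Sum>\<alpha>\<in>\<rho> ` ?M. c \<alpha> * (\<Prod>i<Suc m. x i ^ \<alpha> i))
          = (\<Sum>\<alpha>\<in>?M. c (\<rho> \<alpha>) * (\<Prod>i<Suc m. x i ^ \<rho> \<alpha> i))"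
        by (rule sum.reindex[OF inj, unfolded comp_def])
      also have "\<dots> = heval d m f x"
        unfolding heval_def c_def using inj by (intro sum.cong refl) (simp add: pw)
      finally show "(\<Sum>\<alpha>\<in>\<rho> ` ?M. c \<alpha> * (\<Prod>i<Suc m. x i ^ \<alpha> i)) = 0" using van by simp
    qed
  qed
  have "f = 0"
  proof
    fix \<alpha> show "f \<alpha> = 0 \<alpha>"
    proof (cases "\<alpha> \<in> ?M")
      case True
      then show ?thesis using zero[of "\<rho> \<alpha>"] inj by (simp add: c_def)
    next
      case False then show ?thesis using f(1) by (simp add: hom_polys_def)
    qed
  qed
  with f(2) show False by simp
qed

section \<open>Basis\<close>

definition delta :: "(nat \<Rightarrow> nat) \<Rightarrow> (nat \<Rightarrow> nat) \<Rightarrow> 'a::field" where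
  "delta \<alpha> = (\<lambda>\<beta>. if \<beta> = \<alpha> then 1 else 0)"

lemma delta_inj: "inj (delta :: _ \<Rightarrow> _ \<Rightarrow> 'a::field)"
proof (rule injI)
  fix a b assume "(delta a :: _ \<Rightarrow> 'a) = delta b"
  then have "(delta a :: _ \<Rightarrow> 'a) a = delta b a" by simp
  then show "a = b" by (auto simp: delta_def split: if_splits)
qed

lemma delta_hom: "(delta ` monoms d m :: ((nat \<Rightarrow> nat) \<Rightarrow> 'a::field) set) \<subseteq> hom_polys d m"
  by (auto simp: delta_def hom_polys_def)

lemma card_delta: "card (delta ` monoms d m :: ((nat \<Rightarrow> nat) \<Rightarrow> 'a::field) set) = (m + d) choose d"
  using card_image[OF inj_on_subset[OF delta_inj subset_UNIV]] card_monoms by metis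

lemma delta_indep: "FV.independent (delta ` monoms d m :: ((nat \<Rightarrow> nat) \<Rightarrow> 'a::field) set)"
proof (rule FV.independent_if_scalars_zero)
  show "finite (delta ` monoms d m :: ((nat \<Rightarrow> nat) \<Rightarrow> 'a::field) set)" using finite_monoms by simp
next
  fix u :: "((nat \<Rightarrow> nat) \<Rightarrow> 'a) \<Rightarrow> 'a" and x :: "(nat \<Rightarrow> nat) \<Rightarrow> 'a"
  assume h: "(\<Sum>x\<in>delta ` monoms d m. (\<lambda>\<alpha>. u x * x \<alpha>)) = 0" and x: "x \<in> delta ` monoms d m"
  then obtain \<gamma> where g: "\<gamma> \<in> monoms d m" "x = delta \<gamma>" by auto
  have "0 = (\<Sum>y\<in>delta ` monoms d m. (\<lambda>\<alpha>. u y * y \<alpha>)) \<gamma>" using h by simp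
  also have "\<dots> = (\<Sum>y\<in>delta ` monoms d m. u y * y \<gamma>)" by (simp add: sum_fun_apply)
  also have "\<dots> = (\<Sum>\<alpha>\<in>monoms d m. u (delta \<alpha>) * delta \<alpha> \<gamma>)"
    by (rule sum.reindex[OF inj_on_subset[OF delta_inj subset_UNIV], unfolded comp_def])
  also have "(\<lambda>\<alpha>. u (delta \<alpha>) * delta \<alpha> \<gamma>) = (\<lambda>\<alpha>. if \<alpha> = \<gamma> then u (delta \<gamma>) else 0)"
    by (auto simp: delta_def fun_eq_iff)
  also have "(\<Sum>\<alpha>\<in>monoms d m. if \<alpha> = \<gamma> then u (delta \<gamma>) else 0) = u (delta \<gamma>)"
    using g(1) finite_monoms by (simp add: sum.delta)
  finally show "u x = 0" using g by simp
qed

lemma hom_in_span: "hom_polys d m \<subseteq> FV.span (delta ` monoms d m :: ((nat \<Rightarrow> nat) \<Rightarrow> 'a::field) set)"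
proof
  fix f :: "(nat \<Rightarrow> nat) \<Rightarrow> 'a" assume f: "f \<in> hom_polys d m"
  have e: "f = (\<Sum>\<alpha>\<in>monoms d m. (\<lambda>\<beta>. f \<alpha> * delta \<alpha> \<beta>))"
  proof
    fix \<beta>
    have "(\<Sum>\<alpha>\<in>monoms d m. (\<lambda>\<beta>. f \<alpha> * delta \<alpha> \<beta>)) \<beta> = (\<Sum>\<alpha>\<in>monoms d m. f \<alpha> * delta \<alpha> \<beta>)"
      by (simp add: sum_fun_apply)
    also have "(\<lambda>\<alpha>. f \<alpha> * delta \<alpha> \<beta>) = (\<lambda>\<alpha>. if \<alpha> = \<beta> then f \<beta> else 0)"
      by (rule ext) (simp add: delta_def)
    also have "(\<Sum>\<alpha>\<in>monoms d m. if \<alpha> = \<beta> then f \<beta> else 0) = f \<beta>"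
      using f finite_monoms by (simp add: sum.delta hom_polys_def)
    finally show "f \<beta> = (\<Sum>\<alpha>\<in>monoms d m. (\<lambda>\<beta>. f \<alpha> * delta \<alpha> \<beta>)) \<beta>" by simp
  qed
  have "(\<Sum>\<alpha>\<in>monoms d m. (\<lambda>\<beta>. f \<alpha> * delta \<alpha> \<beta>)) \<in> FV.span (delta ` monoms d m :: ((nat \<Rightarrow> nat) \<Rightarrow> 'a) set)"
    by (intro FV.span_sum FV.span_scale FV.span_base) auto
  then show "f \<in> FV.span (delta ` monoms d m :: ((nat \<Rightarrow> nat) \<Rightarrow> 'a) set)" using e by simp
qed

lemma spans_all:
  assumes "F \<subseteq> hom_polys d m" "FV.independent F" "card F = (m + d) choose d"
  shows "hom_polys d m \<subseteq> FV.span (F :: ((nat \<Rightarrow> nat) \<Rightarrow> 'a::field) set)"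
proof
  fix a :: "(nat \<Rightarrow> nat) \<Rightarrow> 'a" assume a: "a \<in> hom_polys d m"
  show "a \<in> FV.span F"
  proof (rule ccontr)
    assume na: "a \<notin> FV.span F"
    then have aF: "a \<notin> F" using FV.span_base by blast
    have ind: "FV.independent (insert a F)" using FV.independent_insert[of a F] assms(2) na aF by simp
    have "insert a F \<subseteq> FV.span (delta ` monoms d m :: ((nat \<Rightarrow> nat) \<Rightarrow> 'a) set)"
      using hom_in_span assms(1) a by blast
    from FV.independent_span_bound[OF _ ind this] finite_monoms
    have "finite (insert a F)" "card (insert a F) \<le> (m + d) choose d"
      using card_delta[where 'a='a, of d m] by auto
    then show False using assms(3) aF by simp
  qed
qed

section \<open>Projective points\<close>

lemma finite_affine: "finite {x :: nat \<Rightarrow> 'a::{finite,zero}. \<forall>i>m. x i = 0}"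
proof -
  have "{x :: nat \<Rightarrow> 'a. \<forall>i>m. x i = 0} \<subseteq>
        (\<lambda>l i. if i \<le> m then l ! i else 0) ` {l. set l \<subseteq> UNIV \<and> length l = Suc m}"
  proof
    fix x :: "nat \<Rightarrow> 'a" assume x: "x \<in> {x. \<forall>i>m. x i = 0}"
    have "x = (\<lambda>i. if i \<le> m then map x [0..<Suc m] ! i else 0)"
    proof
      fix i show "x i = (if i \<le> m then map x [0..<Suc m] ! i else 0)"
      proof (cases "i \<le> m")
        case True then show ?thesis by (subst nth_map) (simp_all del: upt_Suc)
      next
        case False then show ?thesis using x by simp
      qed
    qed
    then show "x \<in> (\<lambda>l i. if i \<le> m then l ! i else 0) ` {l. set l \<subseteq> UNIV \<and> length l = Suc m}"
      by (intro image_eqI[where x="map x [0..<Suc m]"]) auto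
  qed
  moreover have "finite {l::'a list. set l \<subseteq> UNIV \<and> length l = Suc m}"
    by (rule finite_lists_length_eq) simp
  ultimately show ?thesis by (meson finite_imageI finite_subset)
qed

lemma finite_proj: "finite (proj_points m :: (nat \<Rightarrow> 'a::{finite,field}) set set)"
proof -
  have "proj_points m \<subseteq> (\<lambda>x. {(\<lambda>i. c * x i) | c. c \<noteq> 0}) ` {x :: nat \<Rightarrow> 'a. \<forall>i>m. x i = 0}"
    by (auto simp: proj_points_def)
  then show ?thesis by (rule finite_subset) (intro finite_imageI finite_affine)
qed

lemma step:
  fixes F :: "((nat \<Rightarrow> nat) \<Rightarrow> 'a::{finite,field}) set"
  assumes F: "F \<subseteq> hom_polys d m" "card F = Suc r" "FV.independent F"
    and d: "1 \<le> d" "d \<le> card (UNIV::'a set)"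
  shows "\<exists>G::((nat \<Rightarrow> nat) \<Rightarrow> 'a) set. G \<subseteq> hom_polys d m \<and> card G = r \<and> FV.independent G \<and> num_zeros d m F < num_zeros d m G"
proof -
  have finF: "finite F" using F(2) card_ge_0_finite by force
  obtain fj where fj: "fj \<in> F" using F(2) by fastforce
  have fj0: "fj \<noteq> 0" using fj F(3) FV.dependent_zero by blast
  obtain x0 where x0: "heval d m fj x0 \<noteq> 0" using hom_nonvanish[OF _ fj0 d] fj F(1) by blast
  define x where "x = (\<lambda>i. if i \<le> m then x0 i else 0::'a)"
  have hx: "heval d m fj x \<noteq> 0" using x0 heval_local[of d m fj x0] by (simp add: x_def)
  have "\<exists>i\<le>m. x i \<noteq> 0"
  proof (rule ccontr)
    assume "\<not> ?thesis"
    then have "x = (\<lambda>_. 0)" by (auto simp: x_def fun_eq_iff)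
    then show False using hx heval_at_zero[OF d(1), of m fj] by simp
  qed
  define P0 where "P0 = {(\<lambda>i. c * x i) | c. c \<noteq> 0}"
  have P0: "P0 \<in> proj_points m"
    unfolding proj_points_def P0_def using \<open>\<exists>i\<le>m. x i \<noteq> 0\<close> by (auto simp: x_def)
  have xP0: "x \<in> P0" unfolding P0_def by (rule CollectI, rule exI[of _ 1]) simp
  define t where "t f = heval d m f x / heval d m fj x" for f
  define g where "g f = (\<lambda>\<alpha>. f \<alpha> - t f * fj \<alpha>)" for f
  define W where "W = g ` (F - {fj})"
  define Z where "Z (H::((nat \<Rightarrow> nat) \<Rightarrow> 'a) set) = {P \<in> proj_points m. \<forall>f\<in>H. \<forall>y\<in>P. heval d m f y = 0}" for H
  have hg: "heval d m (g f) y = heval d m f y - t f * heval d m fj y" for f y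
    unfolding g_def by (rule heval_lin)
  have ghom: "g f \<in> hom_polys d m" if "f \<in> F" for f
  proof -
    have "f \<in> hom_polys d m" "fj \<in> hom_polys d m" using that F(1) fj by auto
    then show ?thesis by (simp add: g_def hom_polys_def)
  qed
  have gx: "heval d m (g f) x = 0" for f
    using hx by (simp add: hg t_def)
  have WH: "W \<subseteq> hom_polys d m" using ghom by (auto simp: W_def)
  have fjW: "fj \<notin> W" using gx hx by (auto simp: W_def)
  define T where "T = insert fj W"
  have finW: "finite W" using finF by (simp add: W_def)
  have finT: "finite T" using finW by (simp add: T_def)
  have FT: "F \<subseteq> FV.span T"
  proof
    fix f assume f: "f \<in> F"
    show "f \<in> FV.span T"
    proof (cases "f = fj")
      case True then show ?thesis by (simp add: T_def FV.span_base)
    next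
      case False
      have e: "f = g f + (\<lambda>\<alpha>. t f * fj \<alpha>)" by (simp add: g_def fun_eq_iff)
      have "g f \<in> FV.span T" using f False by (intro FV.span_base) (auto simp: T_def W_def)
      moreover have "(\<lambda>\<alpha>. t f * fj \<alpha>) \<in> FV.span T"
        by (intro FV.span_scale FV.span_base) (simp add: T_def)
      ultimately show ?thesis using e FV.span_add by metis
    qed
  qed
  have cW: "card W \<le> r"
    using card_image_le[of "F - {fj}" g] finF fj F(2) by (simp add: W_def)
  have cT: "card T = Suc (card W)" using finW fjW by (simp add: T_def)
  have "Suc r \<le> card T" using FV.independent_span_bound[OF finT F(3) FT] F(2) by simp
  then have cW2: "card W = r" using cW cT by simp
  have indT: "FV.independent T"
  proof
    assume "FV.dependent T"
    then obtain a where a: "a \<in> T" "a \<in> FV.span (T - {a})" unfolding FV.dependent_def by blast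
    have "T \<subseteq> FV.span (T - {a})"
    proof
      fix b assume "b \<in> T"
      then show "b \<in> FV.span (T - {a})"
        using a(2) by (cases "b = a") (auto intro: FV.span_base)
    qed
    then have "FV.span T \<subseteq> FV.span (T - {a})"
      by (intro FV.span_minimal FV.subspace_span)
    then have "F \<subseteq> FV.span (T - {a})" using FT by blast
    from FV.independent_span_bound[OF _ F(3) this] finT
    have "card F \<le> card (T - {a})" by simp
    also have "\<dots> = r" using a(1) finT cT cW2 by simp
    finally show False using F(2) by simp
  qed
  have indW: "FV.independent W" using FV.independent_mono[OF indT, of W] by (auto simp: T_def)
  have ZFW: "insert P0 (Z F) \<subseteq> Z W"
  proof
    fix P assume "P \<in> insert P0 (Z F)"
    then consider "P = P0" | "P \<in> Z F" by blast
    then show "P \<in> Z W"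
    proof cases
      case 1
      have hP0: "heval d m w y = 0" if "w \<in> W" "y \<in> P0" for w y
      proof -
        obtain f where f: "f \<in> F" "w = g f" using \<open>w \<in> W\<close> unfolding W_def by blast
        obtain c where y: "y = (\<lambda>i. c * x i)" using \<open>y \<in> P0\<close> unfolding P0_def by blast
        have hh: "\<forall>\<alpha>. \<alpha> \<notin> monoms d m \<longrightarrow> g f \<alpha> = 0" using ghom[OF f(1)] unfolding hom_polys_def by blast
        have "heval d m (g f) y = c ^ d * heval d m (g f) x" unfolding y by (rule heval_homog[OF hh])
        then show ?thesis using gx[of f] f(2) by simp
      qed
      have "P0 \<in> Z W" unfolding Z_def using P0 hP0 by simp
      then show ?thesis using 1 by simp
    next
      case 2
      have "heval d m w y = 0" if "w \<in> W" "y \<in> P" for w y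
      proof -
        obtain f where f: "f \<in> F - {fj}" "w = g f" using \<open>w \<in> W\<close> by (auto simp: W_def)
        have "heval d m f y = 0" "heval d m fj y = 0" using 2 f(1) fj that(2) unfolding Z_def by auto
        then show ?thesis by (simp add: f(2) hg)
      qed
      then show ?thesis using 2 by (simp add: Z_def)
    qed
  qed
  have P0F: "P0 \<notin> Z F"
  proof
    assume "P0 \<in> Z F"
    then have "heval d m fj x = 0" using xP0 fj unfolding Z_def by blast
    with hx show False by simp
  qed
  have finZW: "finite (Z W)" using finite_proj[where 'a='a, of m] by (rule rev_finite_subset) (unfold Z_def, rule Collect_restrict)
  have "card (Z F) < card (Z W)"
  proof -
    have "card (insert P0 (Z F)) \<le> card (Z W)" by (rule card_mono[OF finZW ZFW])
    moreover have "finite (Z F)" using finZW ZFW by (meson finite_subset subset_insertI)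
    ultimately show ?thesis using P0F by simp
  qed
  moreover have "num_zeros d m F = card (Z F)" "num_zeros d m W = card (Z W)"
    unfolding num_zeros_def Z_def by (rule refl)+
  ultimately have "num_zeros d m F < num_zeros d m W" by simp
  then have "W \<subseteq> hom_polys d m \<and> card W = r \<and> FV.independent W \<and> num_zeros d m F < num_zeros d m W"
    using WH cW2 indW by simp
  then show ?thesis by (rule exI)
qed

lemma zeros_full:
  fixes F :: "((nat \<Rightarrow> nat) \<Rightarrow> 'a::{finite,field}) set"
  assumes "F \<subseteq> hom_polys d m" "FV.independent F" "card F = (m + d) choose d"
  shows "num_zeros d m F = 0"
proof -
  have E: "{P \<in> proj_points m. \<forall>f\<in>F. \<forall>y\<in>P. heval d m f y = 0} = {}"
  proof (rule ccontr)
    assume "\<not> ?thesis"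
    then obtain P where P: "P \<in> proj_points m" "\<forall>f\<in>F. \<forall>y\<in>P. heval d m f y = 0" by blast
    then obtain x :: "nat \<Rightarrow> 'a" where x: "P = {(\<lambda>i. c * x i) | c. c \<noteq> 0}" "\<exists>i\<le>m. x i \<noteq> 0"
      unfolding proj_points_def by blast
    then obtain k where k: "k \<le> m" "x k \<noteq> 0" by blast
    have xP: "x \<in> P" unfolding x(1) by (rule CollectI, rule exI[of _ 1]) simp
    define \<alpha>0 where "\<alpha>0 = (\<lambda>i. if i = k then d else 0::nat)"
    have a0: "\<alpha>0 \<in> monoms d m" using k(1) by (auto simp: monoms_def \<alpha>0_def sum.delta)
    have "(delta \<alpha>0 :: (nat \<Rightarrow> nat) \<Rightarrow> 'a) \<in> hom_polys d m" using delta_hom a0 by blast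
    then have "(delta \<alpha>0 :: (nat \<Rightarrow> nat) \<Rightarrow> 'a) \<in> FV.span F" using spans_all[OF assms] by blast
    then have "heval d m (delta \<alpha>0 :: (nat \<Rightarrow> nat) \<Rightarrow> 'a) x = 0"
      by (rule heval_span) (use P(2) xP in blast)
    moreover have "heval d m (delta \<alpha>0 :: (nat \<Rightarrow> nat) \<Rightarrow> 'a) x = x k ^ d"
    proof -
      have "heval d m (delta \<alpha>0 :: (nat \<Rightarrow> nat) \<Rightarrow> 'a) x
          = (\<Sum>\<alpha>\<in>monoms d m. if \<alpha> = \<alpha>0 then (\<Prod>i\<le>m. x i ^ \<alpha>0 i) else 0)"
        unfolding heval_def by (intro sum.cong refl) (simp add: delta_def)
      also have "\<dots> = (\<Prod>i\<le>m. x i ^ \<alpha>0 i)" using a0 finite_monoms by (simp add: sum.delta')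
      also have "\<dots> = (\<Prod>i\<le>m. if i = k then x k ^ d else 1)"
        by (intro prod.cong refl) (simp add: \<alpha>0_def)
      also have "\<dots> = x k ^ d" using k(1) by (simp add: prod.delta)
      finally show ?thesis .
    qed
    ultimately show False using k(2) by simp
  qed
  show ?thesis unfolding num_zeros_def E by simp
qed

lemma SS_finite:
  "finite {num_zeros d m (F :: ((nat \<Rightarrow> nat) \<Rightarrow> 'a::{finite,field}) set) | F.
      F \<subseteq> hom_polys d m \<and> card F = r \<and> FV.independent F}"
proof (rule finite_subset)
  show "finite {..card (proj_points m :: (nat \<Rightarrow> 'a) set set)}" by simp
  show "{num_zeros d m (F :: ((nat \<Rightarrow> nat) \<Rightarrow> 'a) set) | F.
      F \<subseteq> hom_polys d m \<and> card F = r \<and> FV.independent F} \<subseteq> {..card (proj_points m :: (nat \<Rightarrow> 'a) set set)}"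
  proof
    fix n assume "n \<in> {num_zeros d m (F :: ((nat \<Rightarrow> nat) \<Rightarrow> 'a) set) | F.
      F \<subseteq> hom_polys d m \<and> card F = r \<and> FV.independent F}"
    then obtain F :: "((nat \<Rightarrow> nat) \<Rightarrow> 'a) set" where n: "n = num_zeros d m F" by blast
    have "n \<le> card (proj_points m :: (nat \<Rightarrow> 'a) set set)"
      unfolding n num_zeros_def by (rule card_mono[OF finite_proj]) blast
    then show "n \<in> {..card (proj_points m :: (nat \<Rightarrow> 'a) set set)}" by simp
  qed
qed

lemma SS_nonempty:
  assumes "r \<le> (m + d) choose d"
  shows "\<exists>F :: ((nat \<Rightarrow> nat) \<Rightarrow> 'a::{finite,field}) set. F \<subseteq> hom_polys d m \<and> card F = r \<and> FV.independent F"
proof -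
  obtain B where B: "B \<subseteq> (delta ` monoms d m :: ((nat \<Rightarrow> nat) \<Rightarrow> 'a) set)" "card B = r"
    using obtain_subset_with_card_n[of r "delta ` monoms d m :: ((nat \<Rightarrow> nat) \<Rightarrow> 'a) set"]
      assms card_delta[where 'a='a, of d m] by metis
  have "FV.independent B" using FV.independent_mono[OF delta_indep B(1)] .
  moreover have "B \<subseteq> hom_polys d m" using B(1) delta_hom[where 'a='a, of d m] by (rule subset_trans)
  ultimately show ?thesis using B(2) by (intro exI[of _ B]) simp
qed

theorem corollary6p3:
  fixes d m :: nat
  assumes "1 \<le> m" and "1 \<le> d" and "d \<le> card (UNIV :: 'a::{finite,field} set)"
  shows "(\<forall>r. 1 \<le> r \<and> r < ((m + d) choose d) \<longrightarrow>
            e_r TYPE('a) (Suc r) d m < e_r TYPE('a) r d m)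
         \<and> e_r TYPE('a) ((m + d) choose d) d m = 0"
proof
  let ?S = "\<lambda>r. {num_zeros d m (F :: ((nat \<Rightarrow> nat) \<Rightarrow> 'a) set) | F.
      F \<subseteq> hom_polys d m \<and> card F = r \<and> FV.independent F}"
  have eS: "e_r TYPE('a) r d m = Max (?S r)" for r by (simp add: e_r_def)
  have neS: "\<exists>F :: ((nat \<Rightarrow> nat) \<Rightarrow> 'a) set. num_zeros d m F \<in> ?S r \<and> F \<subseteq> hom_polys d m \<and> card F = r \<and> FV.independent F" if rr: "r \<le> (m + d) choose d" for r
  proof -
    obtain F :: "((nat \<Rightarrow> nat) \<Rightarrow> 'a) set" where F: "F \<subseteq> hom_polys d m" "card F = r" "FV.independent F"
      using SS_nonempty[where 'a='a, OF rr] by blast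
    then have "num_zeros d m F \<in> ?S r" by (intro CollectI exI[of _ F]) simp
    then show ?thesis using F by (intro exI[of _ F]) simp
  qed
  show "\<forall>r. 1 \<le> r \<and> r < ((m + d) choose d) \<longrightarrow>
            e_r TYPE('a) (Suc r) d m < e_r TYPE('a) r d m"
  proof (intro allI impI)
    fix r assume r: "1 \<le> r \<and> r < (m + d) choose d"
    have "?S (Suc r) \<noteq> {}" using neS[of "Suc r"] r by auto
    then have "Max (?S (Suc r)) \<in> ?S (Suc r)" using SS_finite by (intro Max_in) auto
    then obtain F :: "((nat \<Rightarrow> nat) \<Rightarrow> 'a) set" where F: "Max (?S (Suc r)) = num_zeros d m F"
      "F \<subseteq> hom_polys d m" "card F = Suc r" "FV.independent F" by blast
    obtain G :: "((nat \<Rightarrow> nat) \<Rightarrow> 'a) set" where G: "G \<subseteq> hom_polys d m" "card G = r" "FV.independent G"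
      "num_zeros d m F < num_zeros d m G"
      using step[OF F(2-4) assms(2,3)] by blast
    have "num_zeros d m G \<in> ?S r" using G by (intro CollectI exI[of _ G]) simp
    then have "num_zeros d m G \<le> Max (?S r)" using SS_finite by (intro Max_ge) auto
    then show "e_r TYPE('a) (Suc r) d m < e_r TYPE('a) r d m" using F(1) G(4) eS by simp
  qed
  have "?S ((m + d) choose d) = {0}"
  proof
    show "?S ((m + d) choose d) \<subseteq> {0}"
    proof
      fix n assume "n \<in> ?S ((m + d) choose d)"
      then obtain F :: "((nat \<Rightarrow> nat) \<Rightarrow> 'a) set" where "n = num_zeros d m F" "F \<subseteq> hom_polys d m"
        "card F = (m + d) choose d" "FV.independent F" by blast
      then show "n \<in> {0}" using zeros_full by simp
    qed
    obtain F :: "((nat \<Rightarrow> nat) \<Rightarrow> 'a) set" where F: "num_zeros d m F \<in> ?S ((m + d) choose d)" "F \<subseteq> hom_polys d m"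
        "card F = (m + d) choose d" "FV.independent F" using neS[of "(m + d) choose d"] by auto
    have "num_zeros d m F = 0" using zeros_full[OF F(2,4,3)] .
    then show "{0} \<subseteq> ?S ((m + d) choose d)" using F(1) by simp
  qed
  then show "e_r TYPE('a) ((m + d) choose d) d m = 0" by (simp add: eS)
qed

end
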